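(* Fix an integer $q\ge 2$ and an integer $s\ge 0$. For $n\ge1$, $N=\{1,\dots,n\}$, let $F^c=\{-\tfrac{q-1}{2},\dots,\tfrac{q-1}{2}\}$ (step $1$), $\Omega=(F^c)^N$, and for couplings $J_A\ge 0$ ($A\subset N$, $|A|\ge2$) let $x_A=e^{J_A}$ and $Z_\gamma=\prod_A x_A^{\delta_{(\sigma^A)_\gamma}}$, where $\delta_{(\sigma^A)_\gamma}=1$ if all coordinates $(\sigma_i)_\gamma$, $i\in A$, are equal and $0$ otherwise. For a list $R$ of elements of $N$ (repetitions allowed) and $A'\subset\Omega$ put $\zeta(R,A')=\sum_{\gamma\in A'}(\sigma^R)_\gamma Z_\gamma$, where $(\sigma^R)_\gamma=\prod_{i\in R}(\sigma_i)_\gamma$ with multiplicity, and $\zeta(R)=\zeta(R,\Omega)$. Suppose that $\zeta(R)\ge 0$ for every $n\ge1$, every list $R$ of elements of $\{1,\dots,n\}$, and every choice of couplings with at most $s$ nonzero $J_A$. Then for every $n$, every list $R$ of elements of $N$, every choice of couplings with $s$ nonzero $J_A$, and every $B\subset N$, we have $\zeta(R,B^{(1)})\ge 0$, where $B^{(1)}=\{\gamma\in\Omega:\delta_{(\sigma^B)_\gamma}=1\}$.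
   Context: $\zeta(R)$ equals $Z\langle\sigma^R\rangle$ for the generalized Potts Gibbs measure $P(\gamma)=Z_\gamma/Z$, $Z=\sum_\gamma Z_\gamma$, with centered spin values. The paper's hypothesis is phrased as "$\zeta^N_s(R)\ge0$ for any $n$ vertices and $q$ number of spins"; it is here read as holding for all systems with at most $s$ nonzero couplings. *)

theory Defs
  imports Complex_Main "HOL-Library.FuncSet"
begin

definition spin :: "nat \<Rightarrow> nat \<Rightarrow> real" where
  "spin q k = real k - (real q - 1) / 2"

text \<open>Configurations gamma in Omega: vertex i in {1..n} gets state gamma i < q
  (spin value spin q (gamma i)).\<close>
definition configs :: "nat \<Rightarrow> nat \<Rightarrow> (nat \<Rightarrow> nat) set" where
  "configs q n = PiE {1..n} (\<lambda>_. {..<q})"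

definition delta :: "(nat \<Rightarrow> nat) \<Rightarrow> nat set \<Rightarrow> nat" where
  "delta \<gamma> A = (if \<forall>i\<in>A. \<forall>j\<in>A. \<gamma> i = \<gamma> j then 1 else 0)"

definition hedges :: "nat \<Rightarrow> nat set set" where
  "hedges n = {A. A \<subseteq> {1..n} \<and> 2 \<le> card A}"

definition Zw :: "nat \<Rightarrow> (nat set \<Rightarrow> real) \<Rightarrow> (nat \<Rightarrow> nat) \<Rightarrow> real" where
  "Zw n J \<gamma> = (\<Prod>A\<in>hedges n. exp (J A) ^ delta \<gamma> A)"

definition sigmaR :: "nat \<Rightarrow> nat list \<Rightarrow> (nat \<Rightarrow> nat) \<Rightarrow> real" where
  "sigmaR q R \<gamma> = prod_list (map (\<lambda>i. spin q (\<gamma> i)) R)"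

definition zeta :: "nat \<Rightarrow> nat \<Rightarrow> (nat set \<Rightarrow> real) \<Rightarrow> nat list \<Rightarrow> (nat \<Rightarrow> nat) set \<Rightarrow> real" where
  "zeta q n J R S = (\<Sum>\<gamma>\<in>S. sigmaR q R \<gamma> * Zw n J \<gamma>)"

definition nonneg_couplings :: "nat \<Rightarrow> (nat set \<Rightarrow> real) \<Rightarrow> bool" where
  "nonneg_couplings n J = (\<forall>A\<in>hedges n. 0 \<le> J A)"

definition num_nonzero :: "nat \<Rightarrow> (nat set \<Rightarrow> real) \<Rightarrow> nat" where
  "num_nonzero n J = card {A\<in>hedges n. J A \<noteq> 0}"

definition B1 :: "nat \<Rightarrow> nat \<Rightarrow> nat set \<Rightarrow> (nat \<Rightarrow> nat) set" where
  "B1 q n B = {\<gamma>\<in>configs q n. delta \<gamma> B = 1}"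

end

theory Submission
  imports Defs
begin

lemma sum_PiE_restrict:
  fixes g :: "('a \<Rightarrow> 'b) \<Rightarrow> real"
  assumes "finite D" "S \<inter> D = {}" "finite A"
  shows "(\<Sum>\<gamma>\<in>PiE (S\<union>D) (\<lambda>_. A). g (restrict \<gamma> S)) = real (card A)^card D * (\<Sum>\<delta>\<in>PiE S (\<lambda>_. A). g \<delta>)"
  using assms(1,2)
proof (induction D rule: finite_induct)
  case empty
  then show ?case by (simp cong: sum.cong)
next
  case (insert k D)
  have kn: "k \<notin> S \<union> D" using insert by auto
  have eq: "S \<union> insert k D = insert k (S \<union> D)" by auto
  have "(\<Sum>\<gamma>\<in>PiE (S \<union> insert k D) (\<lambda>_. A). g (restrict \<gamma> S))
      = (\<Sum>p\<in>A \<times> PiE (S\<union>D) (\<lambda>_. A). g (restrict ((\<lambda>(y, g). g(k := y)) p) S))"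
    unfolding eq PiE_insert_eq
    by (subst sum.reindex[OF inj_combinator[OF kn]]) (simp add: o_def)
  also have "\<dots> = (\<Sum>p\<in>A \<times> PiE (S\<union>D) (\<lambda>_. A). g (restrict (snd p) S))"
    using kn by (intro sum.cong refl) (auto simp: restrict_def split: prod.splits intro!: arg_cong[where f=g])
  also have "\<dots> = real (card A) * (\<Sum>h\<in>PiE (S\<union>D) (\<lambda>_. A). g (restrict h S))"
    using sum.cartesian_product[of "\<lambda>y h. g (restrict h S)" "PiE (S\<union>D) (\<lambda>_. A)" A]
    by (simp add: split_def)
  also have "\<dots> = real (card A)^card (insert k D) * (\<Sum>\<delta>\<in>PiE S (\<lambda>_. A). g \<delta>)"
  proof -
    have "S \<inter> D = {}" using insert.prems by auto
    from insert.IH[OF this] show ?thesis using insert.hyps by (simp add: restrict_def)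
  qed
  finally show ?case .
qed

lemma Zw_exp: "Zw n J \<gamma> = exp (\<Sum>A\<in>hedges n. real (delta \<gamma> A) * J A)"
proof -
  have fin: "finite (hedges n)"
    by (rule finite_subset[of _ "Pow {1..n}"]) (auto simp: hedges_def)
  show ?thesis unfolding Zw_def using fin
    by (simp add: exp_sum exp_of_nat_mult)
qed

lemma finite_hedges: "finite (hedges n)"
  by (rule finite_subset[of _ "Pow {1..n}"]) (auto simp: hedges_def)

theorem lemma2:
  fixes q s :: nat
  assumes "q \<ge> 2"
    and hyp: "\<forall>m R J. 1 \<le> m \<longrightarrow> set R \<subseteq> {1..m} \<longrightarrow> nonneg_couplings m J
              \<longrightarrow> num_nonzero m J \<le> s \<longrightarrow> 0 \<le> zeta q m J R (configs q m)"
    and "1 \<le> n" and "set R \<subseteq> {1..n}"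
    and "nonneg_couplings n J" and "num_nonzero n J = s"
    and "B \<subseteq> {1..n}"
  shows "0 \<le> zeta q n J R (B1 q n B)"
proof (cases "B = {}")
  case True
  have "B1 q n B = configs q n" unfolding B1_def delta_def True by simp
  then show ?thesis using hyp assms by simp
next
  case False
  have finB: "finite B" using assms(7) finite_subset by blast
  define b0 where "b0 = Min B"
  have b0B: "b0 \<in> B" using False finB b0_def by simp
  define f where "f i = (if i \<in> B then b0 else i)" for i
  define S where "S = {1..n} - (B - {b0})"
  define D where "D = B - {b0}"
  define H where "H = hedges n"
  have finH: "finite H" unfolding H_def by (rule finite_hedges)
  have SD: "S \<union> D = {1..n}" "S \<inter> D = {}" "finite D" using assms(7) finB b0B
    unfolding S_def D_def by auto
  have Ssub: "S \<subseteq> {1..n}" unfolding S_def by auto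
  have fS: "f i \<in> S" if "i \<in> {1..n}" for i
    using that b0B assms(7) unfolding f_def S_def by auto
  have f_S: "f i = i" if "i \<in> S" for i using that unfolding f_def S_def by auto
  have ff: "f (f i) = f i" for i unfolding f_def by auto
  define ext where "ext \<delta> = (\<lambda>i. if i \<in> {1..n} then \<delta> (f i) else undefined)" for \<delta> :: "nat \<Rightarrow> nat"
  define J' where "J' A' = (\<Sum>A\<in>{A\<in>H. f`A = A'}. J A)" for A'
  define F where "F \<gamma> = sigmaR q (map f R) \<gamma> * Zw n J' \<gamma>" for \<gamma>
  define G where "G \<gamma> = sigmaR q R \<gamma> * Zw n J \<gamma>" for \<gamma>
  define H2 where "H2 = {A\<in>H. f`A \<notin> H}"
  define H1 where "H1 = {A\<in>H. f`A \<in> H}"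
  define C where "C = exp (\<Sum>A\<in>H2. J A)"
  have img: "f ` A \<subseteq> S" if "A \<in> H" for A
    using that fS unfolding H_def hedges_def by auto
  have img2: "f ` A \<subseteq> {1..n}" if "A \<in> H" for A using img[OF that] Ssub by auto
  have setfR: "set (map f R) \<subseteq> {1..n}"
  proof
    fix x assume "x \<in> set (map f R)"
    then obtain i where "i \<in> set R" "x = f i" by auto
    then show "x \<in> {1..n}" using assms(4) fS Ssub by blast
  qed
  have nnJ': "nonneg_couplings n J'"
    using assms(5) unfolding nonneg_couplings_def J'_def H_def by (auto intro!: sum_nonneg)
  have "{A\<in>hedges n. J' A \<noteq> 0} \<subseteq> (\<lambda>A. f`A) ` {A\<in>hedges n. J A \<noteq> 0}"
  proof
    fix A' assume "A' \<in> {A\<in>hedges n. J' A \<noteq> 0}"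
    then have "J' A' \<noteq> 0" by simp
    then obtain A where "A \<in> {A\<in>H. f`A = A'}" "J A \<noteq> 0"
      unfolding J'_def by (meson sum.neutral)
    then show "A' \<in> (\<lambda>A. f`A) ` {A\<in>hedges n. J A \<noteq> 0}" unfolding H_def by auto
  qed
  then have "num_nonzero n J' \<le> card ((\<lambda>A. f`A) ` {A\<in>hedges n. J A \<noteq> 0})"
    unfolding num_nonzero_def
    by (intro card_mono) (simp_all add: finite_hedges)
  also have "\<dots> \<le> s" using assms(6) card_image_le[of "{A\<in>hedges n. J A \<noteq> 0}" "\<lambda>A. f`A"]
    unfolding num_nonzero_def by (simp add: finite_hedges)
  finally have nzJ': "num_nonzero n J' \<le> s" .
  have step1: "0 \<le> sum F (configs q n)"
    using hyp assms(3) setfR nnJ' nzJ' unfolding zeta_def F_def by blast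
  have Finv: "F \<gamma> = F (ext (restrict \<gamma> S))" if "\<gamma> \<in> configs q n" for \<gamma>
  proof -
    have phi: "ext (restrict \<gamma> S) i = \<gamma> (f i)" if "i \<in> {1..n}" for i
      using that fS unfolding ext_def by auto
    have phiS: "ext (restrict \<gamma> S) i = \<gamma> i" if "i \<in> S" for i
      using that Ssub phi f_S by auto
    have "sigmaR q (map f R) \<gamma> = sigmaR q (map f R) (ext (restrict \<gamma> S))"
      unfolding sigmaR_def map_map
    proof (intro arg_cong[where f=prod_list] map_cong refl)
      fix i assume "i \<in> set R"
      then have "f i \<in> {1..n}" using setfR by auto
      then show "((\<lambda>i. spin q (\<gamma> i)) \<circ> f) i = ((\<lambda>i. spin q (ext (restrict \<gamma> S) i)) \<circ> f) i"
        using phi ff by simp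
    qed
    moreover have "Zw n J' \<gamma> = Zw n J' (ext (restrict \<gamma> S))"
      unfolding Zw_exp
    proof (intro arg_cong[where f=exp] sum.cong refl)
      fix A assume "A \<in> hedges n"
      show "real (delta \<gamma> A) * J' A = real (delta (ext (restrict \<gamma> S)) A) * J' A"
      proof (cases "A \<subseteq> S")
        case True
        then have "\<forall>i\<in>A. ext (restrict \<gamma> S) i = \<gamma> i" using phiS by blast
        then have "delta \<gamma> A = delta (ext (restrict \<gamma> S)) A"
          unfolding delta_def by simp
        then show ?thesis by simp
      next
        case False
        have e: "{A0\<in>H. f`A0 = A} = {}" using img False by auto
        have "J' A = 0" unfolding J'_def e by (rule sum.empty)
        then show ?thesis by simp
      qed
    qed
    ultimately show ?thesis unfolding F_def by simp
  qed
  have "sum F (configs q n) = (\<Sum>\<gamma>\<in>PiE (S\<union>D) (\<lambda>_. {..<q}). (F \<circ> ext) (restrict \<gamma> S))"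
    unfolding configs_def SD(1)[symmetric]
  proof (intro sum.cong refl)
    fix \<gamma> assume "\<gamma> \<in> PiE (S\<union>D) (\<lambda>_. {..<q})"
    then have "\<gamma> \<in> configs q n" unfolding configs_def SD(1) .
    from Finv[OF this] show "F \<gamma> = (F \<circ> ext) (restrict \<gamma> S)" by (simp only: o_def)
  qed
  also have "\<dots> = real (card {..<q}) ^ card D * (\<Sum>\<delta>\<in>PiE S (\<lambda>_. {..<q}). (F \<circ> ext) \<delta>)"
    by (rule sum_PiE_restrict) (use SD in auto)
  finally have "0 \<le> real q ^ card D * (\<Sum>\<delta>\<in>PiE S (\<lambda>_. {..<q}). F (ext \<delta>))"
    using step1 by simp
  moreover have "0 < real q ^ card D" using assms(1) by simp
  ultimately have step2: "0 \<le> (\<Sum>\<delta>\<in>PiE S (\<lambda>_. {..<q}). F (ext \<delta>))"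
    by (simp add: zero_le_mult_iff)
  have fB1: "\<gamma> (f i) = \<gamma> i" if "\<gamma> \<in> B1 q n B" "i \<in> {1..n}" for \<gamma> i
  proof -
    have "delta \<gamma> B = 1" using that(1) unfolding B1_def by simp
    have "\<forall>i\<in>B. \<forall>j\<in>B. \<gamma> i = \<gamma> j"
    proof (rule ccontr)
      assume "\<not> (\<forall>i\<in>B. \<forall>j\<in>B. \<gamma> i = \<gamma> j)"
      then have "delta \<gamma> B = 0" unfolding delta_def by (simp only: if_False)
      then show False using \<open>delta \<gamma> B = 1\<close> by simp
    qed
    note all = this
    show ?thesis
    proof (cases "i \<in> B")
      case True
      have "f i = b0" unfolding f_def using True by simp
      then show ?thesis using all b0B True by metis
    next
      case False
      have "f i = i" unfolding f_def using False by simp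
      then show ?thesis by simp
    qed
  qed
  have B1c: "\<gamma> \<in> configs q n" if "\<gamma> \<in> B1 q n B" for \<gamma> using that unfolding B1_def by simp
  have extS: "ext \<delta> i = \<delta> i" if "i \<in> S" for \<delta> i
  proof -
    have "i \<in> {1..n}" using that Ssub by blast
    then show ?thesis unfolding ext_def using f_S[OF that] by simp
  qed
  have bij: "bij_betw ext (PiE S (\<lambda>_. {..<q})) (B1 q n B)"
  proof (rule bij_betw_byWitness[where f'="\<lambda>\<gamma>. restrict \<gamma> S"])
    show "\<forall>\<delta>\<in>PiE S (\<lambda>_. {..<q}). restrict (ext \<delta>) S = \<delta>"
    proof
      fix \<delta> assume d: "\<delta> \<in> PiE S (\<lambda>_. {..<q})"
      show "restrict (ext \<delta>) S = \<delta>"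
      proof
        fix i show "restrict (ext \<delta>) S i = \<delta> i"
        proof (cases "i \<in> S")
          case True then show ?thesis using extS by simp
        next
          case False
          have "\<delta> i = undefined" using d False by (rule PiE_arb)
          then show ?thesis using False by simp
        qed
      qed
    qed
    show "\<forall>\<gamma>\<in>B1 q n B. ext (restrict \<gamma> S) = \<gamma>"
    proof
      fix \<gamma> assume g: "\<gamma> \<in> B1 q n B"
      show "ext (restrict \<gamma> S) = \<gamma>"
      proof
        fix i show "ext (restrict \<gamma> S) i = \<gamma> i"
        proof (cases "i \<in> {1..n}")
          case True
          have "ext (restrict \<gamma> S) i = \<gamma> (f i)" unfolding ext_def using True fS[OF True] by simp
          then show ?thesis using fB1[OF g True] by simp
        next
          case False
          have "\<gamma> i = undefined" using B1c[OF g] False unfolding configs_def by (rule PiE_arb)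
          moreover have "ext (restrict \<gamma> S) i = undefined"
            using False unfolding ext_def by (simp only: if_False)
          ultimately show ?thesis by simp
        qed
      qed
    qed
    show "ext ` PiE S (\<lambda>_. {..<q}) \<subseteq> B1 q n B"
    proof
      fix \<gamma> assume "\<gamma> \<in> ext ` PiE S (\<lambda>_. {..<q})"
      then obtain \<delta> where d: "\<delta> \<in> PiE S (\<lambda>_. {..<q})" and g: "\<gamma> = ext \<delta>" by blast
      have "\<gamma> \<in> configs q n" unfolding configs_def PiE_iff
      proof
        show "\<forall>i\<in>{1..n}. \<gamma> i \<in> {..<q}"
        proof
          fix i assume i: "i \<in> {1..n}"
          have "\<gamma> i = \<delta> (f i)" unfolding g ext_def using i by simp
          moreover have "\<delta> (f i) \<in> {..<q}" using d fS[OF i] by (simp add: PiE_iff)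
          ultimately show "\<gamma> i \<in> {..<q}" by simp
        qed
        show "\<gamma> \<in> extensional {1..n}" unfolding g ext_def extensional_def by simp
      qed
      moreover have "delta \<gamma> B = 1"
      proof -
        have "\<gamma> i = \<delta> b0" if "i \<in> B" for i
          using that assms(7) unfolding g ext_def f_def by auto
        then show ?thesis unfolding delta_def by simp
      qed
      ultimately show "\<gamma> \<in> B1 q n B" unfolding B1_def by simp
    qed
    show "(\<lambda>\<gamma>. restrict \<gamma> S) ` B1 q n B \<subseteq> PiE S (\<lambda>_. {..<q})"
    proof
      fix x assume "x \<in> (\<lambda>\<gamma>. restrict \<gamma> S) ` B1 q n B"
      then obtain \<gamma> where g: "\<gamma> \<in> B1 q n B" "x = restrict \<gamma> S" by blast
      have "\<gamma> i \<in> {..<q}" if "i \<in> S" for i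
        using B1c[OF g(1)] that Ssub unfolding configs_def by (auto simp: PiE_iff)
      then show "x \<in> PiE S (\<lambda>_. {..<q})" unfolding g(2) by simp
    qed
  qed
  have GF: "G \<gamma> = C * F \<gamma>" if g: "\<gamma> \<in> B1 q n B" for \<gamma>
  proof -
    have "sigmaR q R \<gamma> = sigmaR q (map f R) \<gamma>"
      unfolding sigmaR_def map_map
      by (intro arg_cong[where f=prod_list] map_cong refl) (use fB1[OF g] assms(4) in auto)
    moreover have "Zw n J \<gamma> = C * Zw n J' \<gamma>"
    proof -
      have dimg: "delta \<gamma> (f`A) = delta \<gamma> A" if "A \<in> H" for A
      proof -
        have "A \<subseteq> {1..n}" using that unfolding H_def hedges_def by auto
        then show ?thesis unfolding delta_def using fB1[OF g] by (auto simp: subset_iff)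
      qed
      have d2: "delta \<gamma> A = 1" if "A \<in> H2" for A
      proof -
        have AH: "A \<in> H" "f`A \<notin> H" using that unfolding H2_def by auto
        have "card (f`A) \<le> 1" using AH img2[OF AH(1)] unfolding H_def hedges_def by auto
        then have "\<forall>x\<in>f`A. \<forall>y\<in>f`A. x = y" using card_le_Suc0_iff_eq[OF finite_subset[OF img2[OF AH(1)] finite_atLeastAtMost]] One_nat_def by metis
        moreover have "A \<subseteq> {1..n}" using AH(1) unfolding H_def hedges_def by auto
        ultimately have "\<forall>i\<in>A. \<forall>j\<in>A. \<gamma> i = \<gamma> j"
        proof (intro ballI)
          fix i j assume h: "\<forall>x\<in>f`A. \<forall>y\<in>f`A. x = y" "A \<subseteq> {1..n}" "i \<in> A" "j \<in> A"
          then have "f i = f j" by blast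
          then have e: "\<gamma> (f i) = \<gamma> (f j)" by simp
          have fi: "\<gamma> (f i) = \<gamma> i" using fB1[OF g] h(2,3) by blast
          have fj: "\<gamma> (f j) = \<gamma> j" using fB1[OF g] h(2,4) by blast
          show "\<gamma> i = \<gamma> j" using e fi fj by simp
        qed
        then show ?thesis unfolding delta_def by (rule if_P)
      qed
      have HU: "H = H1 \<union> H2" "H1 \<inter> H2 = {}" unfolding H1_def H2_def by auto
      have "(\<Sum>A\<in>H. real (delta \<gamma> A) * J A)
          = (\<Sum>A\<in>H1. real (delta \<gamma> A) * J A) + (\<Sum>A\<in>H2. real (delta \<gamma> A) * J A)"
        using HU finH by (simp add: sum.union_disjoint)
      also have "(\<Sum>A\<in>H2. real (delta \<gamma> A) * J A) = (\<Sum>A\<in>H2. J A)"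
        using d2 by simp
      also have "(\<Sum>A\<in>H1. real (delta \<gamma> A) * J A) = (\<Sum>A\<in>H1. real (delta \<gamma> (f`A)) * J A)"
        using dimg unfolding H1_def by simp
      also have "\<dots> = (\<Sum>A'\<in>H. \<Sum>A\<in>{A\<in>H1. f`A = A'}. real (delta \<gamma> (f`A)) * J A)"
        by (rule sum.group[symmetric]) (use finH in \<open>auto simp: H1_def\<close>)
      also have "\<dots> = (\<Sum>A'\<in>H. real (delta \<gamma> A') * J' A')"
      proof (intro sum.cong refl)
        fix A' assume "A' \<in> H"
        then have "{A\<in>H1. f`A = A'} = {A\<in>H. f`A = A'}" unfolding H1_def by auto
        then show "(\<Sum>A\<in>{A\<in>H1. f`A = A'}. real (delta \<gamma> (f`A)) * J A) = real (delta \<gamma> A') * J' A'"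
          unfolding J'_def by (simp add: sum_distrib_left)
      qed
      finally have "(\<Sum>A\<in>H. real (delta \<gamma> A) * J A) = (\<Sum>A\<in>H2. J A) + (\<Sum>A'\<in>H. real (delta \<gamma> A') * J' A')"
        by simp
      then show ?thesis unfolding Zw_exp C_def H_def by (simp add: exp_add)
    qed
    ultimately show ?thesis unfolding G_def F_def by simp
  qed
  have "zeta q n J R (B1 q n B) = sum G (B1 q n B)" unfolding zeta_def G_def by simp
  also have "\<dots> = (\<Sum>\<delta>\<in>PiE S (\<lambda>_. {..<q}). G (ext \<delta>))"
    by (rule sum.reindex_bij_betw[OF bij, symmetric])
  also have "\<dots> = C * (\<Sum>\<delta>\<in>PiE S (\<lambda>_. {..<q}). F (ext \<delta>))"
    unfolding sum_distrib_left using bij GF by (intro sum.cong refl) (auto simp: bij_betw_def)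
  finally show ?thesis using step2 unfolding C_def by simp
qed

end
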